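(* Let $\tilde B^{(r,s)}_{n,k}=[x^ny^k]\frac{1}{x}\mathrm{Rev}\left(\frac{x(1-yx)}{1+rx+sx^2}\right)$ and $\tilde B^{(r,s)}_n(y)=\sum_{k=0}^n\tilde B^{(r,s)}_{n,k}y^k$. Then: (i) the polynomials $\tilde B^{(r,s)}_n(y)$ are the moments of the orthogonal polynomials with coefficient array the Riordan array $$\left(\frac{1+xy}{1+(r+2y)x+(s+ry+y^2)x^2},\ \frac{x}{1+(r+2y)x+(s+ry+y^2)x^2}\right),$$ i.e. the first column of the inverse of this array has generating function $\sum_n\tilde B^{(r,s)}_n(y)x^n$; (ii) $$\sum_{n\ge0}\tilde B^{(r,s)}_n(y)x^n=\cfrac{1}{1-(r+y)x-\cfrac{(s+ry+y^2)x^2}{1-(r+2y)x-\cfrac{(s+ry+y^2)x^2}{1-(r+2y)x-\cdots}}}.$$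
   Context: A Riordan array $(g(x),f(x))$ is the lower-triangular matrix with $(n,k)$ entry $[x^n]g(x)f(x)^k$; moments are the entries of the first column of its inverse. Continued fractions are formal power series limits of convergents. $\mathrm{Rev}$ is compositional inverse in $x$. *)

theory Defs
  imports "HOL-Computational_Algebra.Formal_Power_Series" "HOL-Computational_Algebra.Polynomial"
begin

text \<open>Multiplicative inverse of a power series (meant for series with unit constant term).\<close>
definition fps_uinv :: "'a::comm_ring_1 fps \<Rightarrow> 'a fps" where
  "fps_uinv f = (THE g. f * g = 1)"

definition fps_Rev :: "'a::comm_ring_1 fps \<Rightarrow> 'a fps" where
  "fps_Rev F = (THE G. fps_nth G 0 = 0 \<and> fps_compose F G = fps_X)"

definition riordan :: "'a::comm_ring_1 fps \<Rightarrow> 'a fps \<Rightarrow> nat \<Rightarrow> nat \<Rightarrow> 'a" where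
  "riordan g f n k = fps_nth (g * f ^ k) n"

definition lower_tri :: "(nat \<Rightarrow> nat \<Rightarrow> 'a::zero) \<Rightarrow> bool" where
  "lower_tri A \<longleftrightarrow> (\<forall>n k. n < k \<longrightarrow> A n k = 0)"

definition ltmult :: "(nat \<Rightarrow> nat \<Rightarrow> 'a::comm_ring_1) \<Rightarrow> (nat \<Rightarrow> nat \<Rightarrow> 'a) \<Rightarrow> nat \<Rightarrow> nat \<Rightarrow> 'a" where
  "ltmult A B n k = (\<Sum>j\<le>n. A n j * B j k)"

definition ltid :: "nat \<Rightarrow> nat \<Rightarrow> 'a::comm_ring_1" where
  "ltid n k = (if n = k then 1 else 0)"

text \<open>The variable y, and constants r, s, embedded in the coefficient ring 'a poly.\<close>
definition yv :: "'a::comm_ring_1 poly" where "yv = [:0, 1:]"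

definition Fser :: "'a::comm_ring_1 \<Rightarrow> 'a \<Rightarrow> 'a poly fps" where
  "Fser r s = fps_X * (1 - fps_const yv * fps_X)
      * fps_uinv (1 + fps_const [:r:] * fps_X + fps_const [:s:] * fps_X ^ 2)"

text \<open>Btilde r s n = B~_n^{(r,s)}(y) = sum_k B~_{n,k} y^k, as a polynomial in y:
  the coefficient of x^n in (1/x) Rev(Fser r s).\<close>
definition Btilde :: "'a::comm_ring_1 \<Rightarrow> 'a \<Rightarrow> nat \<Rightarrow> 'a poly" where
  "Btilde r s n = fps_nth (fps_shift 1 (fps_Rev (Fser r s))) n"

text \<open>Convergents of a J-fraction
  1/(1 - a_0 x - b_1 x^2/(1 - a_1 x - b_2 x^2/(...))).
  jconv a b m j is the truncated tail starting at level j, with m further levels.\<close>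
fun jconv :: "(nat \<Rightarrow> 'a::comm_ring_1) \<Rightarrow> (nat \<Rightarrow> 'a) \<Rightarrow> nat \<Rightarrow> nat \<Rightarrow> 'a fps" where
  "jconv a b 0 j = fps_uinv (1 - fps_const (a j) * fps_X)"
| "jconv a b (Suc m) j = fps_uinv (1 - fps_const (a j) * fps_X
      - fps_const (b (Suc j)) * fps_X ^ 2 * jconv a b m (Suc j))"

end

theory Submission
  imports Defs
begin

unbundle fps_syntax




lemma uinv_eq: fixes f :: "'a::comm_ring_1 fps" assumes "f * g = 1" shows "fps_uinv f = g"
  unfolding fps_uinv_def
proof (rule the_equality)
  show "f * g = 1" by fact
  fix h assume "f * h = 1"
  then have "h = h * (f * g)" using assms by simp
  also have "\<dots> = (f * h) * g" by (simp add: ac_simps)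
  finally show "h = g" using \<open>f * h = 1\<close> by simp
qed

lemma uinv_right: fixes f :: "'a::comm_ring_1 fps" assumes "f $ 0 = 1" shows "f * fps_uinv f = 1"
proof -
  have "f * fps_right_inverse f 1 = 1" by (rule fps_right_inverse) (simp add: assms)
  then show ?thesis by (simp add: uinv_eq)
qed

lemma inv_exists: fixes f :: "'a::comm_ring_1 fps" assumes "f $ 0 = 1" shows "\<exists>g. f * g = 1"
  using fps_right_inverse[of f 1] assms by auto

lemma fix_unique: fixes Z1 :: "'a::comm_ring_1 fps"
  assumes "Z1 - Z2 = (Z1 - Z2) * W" "W $ 0 = 0" shows "Z1 = Z2"
proof -
  obtain g where g: "(1 - W) * g = 1" using inv_exists[of "1 - W"] assms(2) by auto
  have "(Z1 - Z2) * (1 - W) = 0" using assms(1) by (simp add: algebra_simps)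
  then have "(Z1 - Z2) * (1 - W) * g = 0" by simp
  then have "Z1 - Z2 = 0" using g by (simp add: mult.assoc)
  then show ?thesis by simp
qed

lemma X_cancel: fixes a :: "'a::comm_ring_1 fps" assumes "fps_X * a = fps_X * b" shows "a = b"
proof (rule fps_ext)
  fix n have "(fps_X * a) $ Suc n = (fps_X * b) $ Suc n" using assms by simp
  then show "a $ n = b $ n" by simp
qed

lemma inv_diff: fixes p :: "'a::comm_ring_1" assumes "P * p = 1" "Q * q = 1"
  shows "p - q = p * q * (Q - P)"
proof -
  have "p * q * (Q - P) = p * (Q * q) - q * (P * p)" by (simp add: algebra_simps)
  then show ?thesis using assms by simp
qed

lemma product_composition_lemma':
  assumes c0: "c$0 = (0::'a::comm_ring_1)"
    and d0: "d$0 = 0"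
  shows "((a oo c) * (b oo d))$n =
    sum (\<lambda>(k,m). a$k * b$m * (c^k * d^m) $ n) {(k,m). k + m \<le> n}"  (is "?l = ?r")
proof -
  let ?S = "{(k::nat, m::nat). k + m \<le> n}"
  have s: "?S \<subseteq> {0..n} \<times> {0..n}" by (simp add: subset_eq)
  have f: "finite {(k::nat, m::nat). k + m \<le> n}"
    by (auto intro: finite_subset[OF s])
  have "?r = (\<Sum>(k, m) \<in> {(k, m). k + m \<le> n}. \<Sum>j = 0..n. a $ k * b $ m * (c ^ k $ j * d ^ m $ (n - j)))"
    by (simp add: fps_mult_nth sum_distrib_left)
  also have "\<dots> = (\<Sum>i = 0..n. \<Sum>(k,m)\<in>{(k,m). k+m \<le> n}. a $ k * c ^ k $ i * b $ m * d ^ m $ (n-i))"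
    unfolding sum.swap [where A = "{0..n}"] by (auto simp add: field_simps intro: sum.cong)
  also have "... = (\<Sum>i = 0..n.
                    \<Sum>q = 0..i. \<Sum>j = 0..n - i. a $ q * c ^ q $ i * (b $ j * d ^ j $ (n - i)))"
    apply (rule sum.cong [OF refl])
    apply (simp add: sum.cartesian_product mult.assoc)
    apply (rule sum.mono_neutral_right[OF f], force)
    by clarsimp (metis c0 d0 leI startsby_zero_power_prefix mult_zero_left mult_zero_right)
  also have "\<dots> = ?l"
    by (simp add: fps_mult_nth fps_compose_nth sum_product)
  finally show ?thesis by simp
qed

lemma compose_mult:
  assumes c0: "c $ 0 = (0::'a::comm_ring_1)"
  shows "(a * b) oo c = (a oo c) * (b oo c)"
proof (rule fps_ext)
  fix n
  show "((a * b) oo c) $ n = ((a oo c) * (b oo c)) $ n"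
    unfolding product_composition_lemma'[OF c0 c0] power_add[symmetric]
      sum_pair_less_iff[where a = "\<lambda>k. a$k" and b="\<lambda>m. b$m" and c="\<lambda>s. (c ^ s)$n" and n = n]
    by (simp add: fps_compose_nth fps_mult_nth sum_distrib_right)
qed

lemma compose_power:
  assumes c0: "c $ 0 = (0::'a::comm_ring_1)"
  shows "(a ^ k) oo c = (a oo c) ^ k"
  by (induction k) (simp_all add: compose_mult[OF c0])





lemma compose_nth_upto: assumes a0: "a $ 0 = (0::'a::comm_ring_1)" and "m \<le> n"
  shows "(A oo a) $ m = (\<Sum>i\<le>n. A $ i * (a ^ i) $ m)"
proof -
  have "(A oo a) $ m = (\<Sum>i\<in>{0..m}. A $ i * (a ^ i) $ m)" by (simp add: fps_compose_nth)
  also have "\<dots> = (\<Sum>i\<le>n. A $ i * (a ^ i) $ m)"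
    apply (rule sum.mono_neutral_left)
    using assms startsby_zero_power_prefix[OF a0] by auto
  finally show ?thesis .
qed

lemma core: assumes a0: "a $ 0 = (0::'a::comm_ring_1)"
  shows "(g * (A oo a)) $ n = (\<Sum>j\<le>n. A $ j * (g * a ^ j) $ n)"
proof -
  have "(g * (A oo a)) $ n = (\<Sum>m=0..n. g $ m * (A oo a) $ (n - m))" by (simp add: fps_mult_nth)
  also have "\<dots> = (\<Sum>m=0..n. g $ m * (\<Sum>i\<le>n. A $ i * (a ^ i) $ (n - m)))"
    by (rule sum.cong[OF refl]) (subst compose_nth_upto[OF a0, of _ n], auto)
  also have "\<dots> = (\<Sum>m=0..n. \<Sum>i\<le>n. A $ i * (g $ m * (a ^ i) $ (n - m)))"
    by (simp add: sum_distrib_left ac_simps)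
  also have "\<dots> = (\<Sum>i\<le>n. \<Sum>m=0..n. A $ i * (g $ m * (a ^ i) $ (n - m)))"
    by (rule sum.swap)
  also have "\<dots> = (\<Sum>j\<le>n. A $ j * (g * a ^ j) $ n)"
    by (simp add: fps_mult_nth sum_distrib_left)
  finally show ?thesis .
qed

lemma riordan_mult: assumes a0: "a $ 0 = (0::'a::comm_ring_1)"
  shows "ltmult (riordan g a) (riordan h l) n k = (g * ((h * l ^ k) oo a)) $ n"
  unfolding ltmult_def riordan_def core[OF a0] by (simp add: ac_simps)

lemma riordan_lower: "lower_tri (riordan h (fps_X * (E::'a::comm_ring_1 fps)))"
  unfolding lower_tri_def riordan_def
proof (intro allI impI)
  fix n k :: nat assume "n < k"
  have "h * (fps_X * E) ^ k = fps_X ^ k * (h * E ^ k)" by (simp add: power_mult_distrib ac_simps)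
  then show "(h * (fps_X * E) ^ k) $ n = 0" using \<open>n < k\<close> by (simp add: fps_X_power_mult_nth)
qed

lemma ltmult_assoc: assumes "lower_tri B"
  shows "ltmult A (ltmult B C) = ltmult (ltmult A B) (C :: nat \<Rightarrow> nat \<Rightarrow> 'a::comm_ring_1)"
proof (intro ext)
  fix n k
  have "ltmult (ltmult A B) C n k = (\<Sum>i\<le>n. \<Sum>j\<le>n. A n j * B j i * C i k)"
    by (simp add: ltmult_def sum_distrib_right)
  also have "\<dots> = (\<Sum>j\<le>n. \<Sum>i\<le>n. A n j * B j i * C i k)" by (rule sum.swap)
  also have "\<dots> = (\<Sum>j\<le>n. \<Sum>i\<le>j. A n j * B j i * C i k)"
  proof (rule sum.cong[OF refl])
    fix j assume "j \<in> {..n}"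
    then show "(\<Sum>i\<le>n. A n j * B j i * C i k) = (\<Sum>i\<le>j. A n j * B j i * C i k)"
      using assms unfolding lower_tri_def
      by (intro sum.mono_neutral_right) auto
  qed
  also have "\<dots> = ltmult A (ltmult B C) n k"
    by (simp add: ltmult_def sum_distrib_left ac_simps)
  finally show "ltmult A (ltmult B C) n k = ltmult (ltmult A B) C n k" by simp
qed

lemma ltmult_id_left: "ltmult ltid M = (M :: nat \<Rightarrow> nat \<Rightarrow> 'a::comm_ring_1)"
proof (intro ext)
  fix n k show "ltmult ltid M n k = M n k"
    unfolding ltmult_def ltid_def
    by (subst sum.cong[OF refl, of _ _ "\<lambda>j. if j = n then M n k else 0"]) auto
qed

lemma ltmult_id_right: "lower_tri M \<Longrightarrow> ltmult M ltid = (M :: nat \<Rightarrow> nat \<Rightarrow> 'a::comm_ring_1)"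
proof (intro ext)
  fix n k assume "lower_tri M" show "ltmult M ltid n k = M n k"
    unfolding ltmult_def ltid_def
    by (subst sum.cong[OF refl, of _ _ "\<lambda>j. if j = k then M n k else 0"])
       (use \<open>lower_tri M\<close> in \<open>auto simp: lower_tri_def\<close>)
qed

lemma riordan_id: "riordan 1 (fps_X :: 'a::comm_ring_1 fps) = ltid"
  by (intro ext) (simp add: riordan_def ltid_def fps_X_power_nth)




lemma alg1: fixes X C B cr cs cy :: "'a::comm_ring_1"
  assumes h1: "B*(1 + cy*X*C) = C" and hC: "C = 1 + (cr + 2*cy)*X*C + (cs + cr*cy + cy^2)*X^2*C^2"
  shows "B = 1 + cr*X*B + cy*X*B^2 + cs*X^2*B^2"
proof -
  define E where "E = 1 - cy*X*B"
  define u where "u = cr + 2*cy"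
  define b where "b = cs + cr*cy + cy^2"
  have CE: "C*E = B" using h1 unfolding E_def by (simp add: algebra_simps)
  have E2: "C*E^2 = B*E" proof - have "C*E^2 = (C*E)*E" by (simp add: power2_eq_square mult.assoc)
    then show ?thesis using CE by simp qed
  have "C*E^2 = (1 + u*X*C + b*X^2*C^2)*E^2" using hC u_def b_def by simp
  also have "\<dots> = E^2 + u*X*(C*E)*E + b*X^2*(C*E)^2" by (simp add: algebra_simps power2_eq_square)
  finally have "B*E = E^2 + u*X*B*E + b*X^2*B^2" by (simp only: CE E2)
  moreover have "B - (1 + cr*X*B + cy*X*B^2 + cs*X^2*B^2) = B*E - (E^2 + u*X*B*E + b*X^2*B^2)"
    unfolding E_def u_def b_def by (simp add: algebra_simps power2_eq_square)
  ultimately show ?thesis by simp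
qed

lemma alg2: fixes X G B cr cs cy :: "'a::comm_ring_1"
  assumes "G = X*B" "B = 1 + cr*X*B + cy*X*B^2 + cs*X^2*B^2"
  shows "G*(1 - cy*G) = X*(1 + cr*G + cs*G^2)"
proof -
  have "G*(1 - cy*G) - X*(1 + cr*G + cs*G^2) = X*(B - (1 + cr*X*B + cy*X*B^2 + cs*X^2*B^2))"
    using assms(1) by (simp add: algebra_simps power2_eq_square)
  then show ?thesis using assms(2) by simp
qed

lemma alg3: fixes X G B cr cs cy :: "'a::comm_ring_1"
  assumes "G = X*B" "G*(1 - cy*G) = X*(1 + cr*G + cs*G^2)"
  shows "X * B = X * (1 + cr*X*B + cy*X*B^2 + cs*X^2*B^2)"
proof -
  have "G*(1 - cy*G) - X*(1 + cr*G + cs*G^2) = X*B - X * (1 + cr*X*B + cy*X*B^2 + cs*X^2*B^2)"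
    using assms(1) by (simp add: algebra_simps power2_eq_square)
  then show ?thesis using assms(2) by simp
qed

lemma alg4: fixes X B1 B2 cr cs cy :: "'a::comm_ring_1"
  assumes "B1 = 1 + cr*X*B1 + cy*X*B1^2 + cs*X^2*B1^2" "B2 = 1 + cr*X*B2 + cy*X*B2^2 + cs*X^2*B2^2"
  shows "B1 - B2 = (B1 - B2) * (X * (cr + cy*(B1+B2) + cs*X*(B1+B2)))"
proof -
  have "(1 + cr*X*B1 + cy*X*B1^2 + cs*X^2*B1^2) - (1 + cr*X*B2 + cy*X*B2^2 + cs*X^2*B2^2)
     = (B1 - B2) * (X * (cr + cy*(B1+B2) + cs*X*(B1+B2)))"
    by (simp add: algebra_simps power2_eq_square)
  then show ?thesis using assms by simp
qed

lemma alg5: fixes X f D V K u b :: "'a::comm_ring_1"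
  assumes "D = 1 + u*X + b*X^2" "D*V = 1" "f = X*V" "K = 1 + u*f*K + b*f^2*K^2"
  shows "K - D = (K - D) * (f * (u + b*f*(K+D)))"
proof -
  have "f*D = X*(D*V)" using assms(3) by (simp add: ac_simps)
  then have fD: "f*D = X" using assms(2) by simp
  have "1 + u*f*D + b*f^2*D^2 = 1 + u*(f*D) + b*(f*D)^2" by (simp add: algebra_simps power2_eq_square)
  also have "\<dots> = D" unfolding fD using assms(1) by simp
  finally have D2: "D = 1 + u*f*D + b*f^2*D^2" by simp
  have "(1 + u*f*K + b*f^2*K^2) - (1 + u*f*D + b*f^2*D^2) = (K - D) * (f * (u + b*f*(K+D)))"
    by (simp add: algebra_simps power2_eq_square)
  then show ?thesis using assms(4) D2 by simp
qed





function cc :: "'a::comm_ring_1 \<Rightarrow> 'a \<Rightarrow> nat \<Rightarrow> 'a" where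
  "cc u b n = (if n = 0 then 1 else u * cc u b (n - 1) + b * (\<Sum>i<n - 1. cc u b i * cc u b (n - 2 - i)))"
  by auto
termination by (relation "measure (\<lambda>(u, b, n). n)") auto

declare cc.simps[simp del]

lemma cc_eq: fixes u b :: "'a::comm_ring_1"
  defines "C \<equiv> Abs_fps (cc u b)"
  shows "C = 1 + fps_const u * fps_X * C + fps_const b * fps_X^2 * C^2"
proof (rule fps_ext)
  fix n
  show "C $ n = (1 + fps_const u * fps_X * C + fps_const b * fps_X^2 * C^2) $ n"
  proof (cases n)
    case 0 then show ?thesis by (simp add: C_def cc.simps)
  next
    case (Suc m)
    have e1: "(fps_const u * fps_X * C) $ n = u * C $ m"
      using Suc by (simp add: mult.assoc)
    have e2: "(fps_const b * fps_X^2 * C^2) $ n = b * (\<Sum>i<m. C $ i * C $ (m - 1 - i))"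
    proof (cases m)
      case 0 then show ?thesis using Suc by (simp add: mult.assoc fps_X_power_mult_nth)
    next
      case (Suc k)
      have "(fps_const b * fps_X^2 * C^2) $ n = b * (C^2) $ k"
        using Suc \<open>n = Suc m\<close> by (simp add: mult.assoc fps_X_power_mult_nth)
      also have "(C^2) $ k = (\<Sum>i=0..k. C $ i * C $ (k - i))" by (simp add: power2_eq_square fps_mult_nth)
      also have "\<dots> = (\<Sum>i<m. C $ i * C $ (m - 1 - i))" using Suc
        by (simp add: atLeast0AtMost lessThan_Suc_atMost)
      finally show ?thesis .
    qed
    show ?thesis using Suc e1 e2 by (simp add: C_def cc.simps[of u b "Suc m"])
  qed
qed





lemma Fser_comp:
  fixes r s :: "'a::comm_ring_1" and G :: "'a poly fps"
  assumes G0: "G $ 0 = 0"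
  defines "P \<equiv> 1 + fps_const [:r:] * fps_X + fps_const [:s:] * fps_X ^ 2"
  defines "V \<equiv> fps_uinv P oo G"
  shows "Fser r s oo G = G * (1 - fps_const yv * G) * V"
    and "(1 + fps_const [:r:] * G + fps_const [:s:] * G ^ 2) * V = 1"
proof -
  show "Fser r s oo G = G * (1 - fps_const yv * G) * V"
    unfolding Fser_def V_def P_def
    by (simp add: compose_mult[OF G0] fps_compose_sub_distrib G0)
  have P0: "P $ 0 = 1" by (simp add: P_def)
  have "(P oo G) * V = (P * fps_uinv P) oo G" unfolding V_def by (simp add: compose_mult[OF G0])
  also have "\<dots> = 1" using uinv_right[OF P0] by simp
  finally show "(1 + fps_const [:r:] * G + fps_const [:s:] * G ^ 2) * V = 1"
    unfolding P_def by (simp add: compose_mult[OF G0] compose_power[OF G0] fps_compose_add_distrib G0)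
qed

lemma shift_X: fixes G :: "'a::comm_ring_1 fps" assumes "G $ 0 = 0" shows "G = fps_X * fps_shift 1 G"
proof (rule fps_ext)
  fix n show "G $ n = (fps_X * fps_shift 1 G) $ n" using assms by (cases n) simp_all
qed

lemma Rev_eq:
  fixes r s :: "'a::comm_ring_1" and B0 :: "'a poly fps"
  assumes quad: "B0 = 1 + fps_const [:r:] * fps_X * B0 + fps_const yv * fps_X * B0^2
                      + fps_const [:s:] * fps_X^2 * B0^2"
  shows "fps_Rev (Fser r s) = fps_X * B0"
  unfolding fps_Rev_def
proof (rule the_equality)
  let ?G = "fps_X * B0"
  have G0: "?G $ 0 = 0" by simp
  note FC = Fser_comp[OF G0, of r s]
  have e: "?G * (1 - fps_const yv * ?G) = fps_X * (1 + fps_const [:r:] * ?G + fps_const [:s:] * ?G^2)"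
    by (rule alg2[OF refl quad])
  have "Fser r s oo ?G = fps_X * ((1 + fps_const [:r:] * ?G + fps_const [:s:] * ?G^2) * (fps_uinv (1 + fps_const [:r:] * fps_X + fps_const [:s:] * fps_X ^ 2) oo ?G))"
    unfolding FC(1) e by (simp add: mult.assoc)
  also have "\<dots> = fps_X" using FC(2) by simp
  finally show "?G $ 0 = 0 \<and> Fser r s oo ?G = fps_X" using G0 by simp
next
  fix G assume "G $ 0 = 0 \<and> Fser r s oo G = fps_X"
  then have G0: "G $ 0 = 0" and FG: "Fser r s oo G = fps_X" by auto
  define B' where "B' = fps_shift 1 G"
  have GB: "G = fps_X * B'" unfolding B'_def by (rule shift_X[OF G0])
  note FC = Fser_comp[OF G0, of r s]
  define V where "V = fps_uinv (1 + fps_const [:r:] * fps_X + fps_const [:s:] * fps_X ^ 2) oo G"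
  define Q where "Q = 1 + fps_const [:r:] * G + fps_const [:s:] * G ^ 2"
  have QV: "Q * V = 1" using FC(2) unfolding Q_def V_def .
  have "G * (1 - fps_const yv * G) * V = fps_X" using FC(1) FG unfolding V_def by simp
  then have "G * (1 - fps_const yv * G) * (V * Q) = fps_X * Q" by (metis mult.assoc)
  then have e: "G * (1 - fps_const yv * G) = fps_X * Q" using QV by (simp add: mult.commute)
  have qB': "B' = 1 + fps_const [:r:] * fps_X * B' + fps_const yv * fps_X * B'^2
                      + fps_const [:s:] * fps_X^2 * B'^2"
    by (rule X_cancel, rule alg3[OF GB]) (use e in \<open>simp add: Q_def\<close>)
  have "B' - B0 = (B' - B0) * (fps_X * (fps_const [:r:] + fps_const yv * (B' + B0) + fps_const [:s:] * fps_X * (B' + B0)))"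
    by (rule alg4[OF qB' quad])
  then have "B' = B0" by (rule fix_unique) simp
  then show "G = fps_X * B0" using GB by simp
qed



lemma alg6: fixes Q C B0 cy X CA CB CU :: "'a::comm_ring_1"
  assumes Qd: "Q = 1 - CU*X - CB*X^2*C" and CUA: "CU = CA + cy" and QC: "Q*C = 1" and hBC: "B0*(1 + cy*X*C) = C"
  shows "(1 - CA*X - CB*X^2*C)*B0 = 1"
proof -
    have e1: "1 - CA * X - CB * X^2 * C = Q + cy * X" by (simp add: Qd CUA algebra_simps)
    have "(Q + cy * X) * B0 = B0 * Q + cy * X * B0" by (simp add: algebra_simps)
    also have "\<dots> = B0 * Q + cy * X * B0 * (C * Q)" using QC by (simp add: mult.commute[of C Q])
    also have "\<dots> = (B0 * (1 + cy * X * C)) * Q" by (simp add: algebra_simps)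
    also have "\<dots> = C * Q" using hBC by simp
    finally have "(Q + cy * X) * B0 = 1" using QC by (simp add: mult.commute[of C Q])
    then show ?thesis using e1 by simp
qed

lemma comp_quad: fixes c C :: "'a::comm_ring_1 fps" assumes c0: "c $ 0 = 0"
  shows "(1 + fps_const u * fps_X * C + fps_const b * fps_X^2 * C^2) oo c
         = 1 + fps_const u * c * (C oo c) + fps_const b * c^2 * (C oo c)^2"
  by (simp add: fps_compose_add_distrib compose_mult[OF c0] compose_power[OF c0] c0)

lemma comp_lin: fixes c C :: "'a::comm_ring_1 fps" assumes c0: "c $ 0 = 0"
  shows "(1 + fps_const y * fps_X * C) oo c = 1 + fps_const y * c * (C oo c)"
  by (simp add: fps_compose_add_distrib compose_mult[OF c0] c0)

lemma comp_lin0: fixes c :: "'a::comm_ring_1 fps" assumes c0: "c $ 0 = 0"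
  shows "(1 + fps_const y * fps_X) oo c = 1 + fps_const y * c"
  by (simp add: fps_compose_add_distrib compose_mult[OF c0] c0)

lemma comp_pow: fixes c C B :: "'a::comm_ring_1 fps" assumes c0: "c $ 0 = 0"
  shows "(B * (fps_X * C)^k) oo c = (B oo c) * (c * (C oo c))^k"
  by (simp add: compose_mult[OF c0] compose_power[OF c0] c0)

lemma comp_gf: fixes c g f :: "'a::comm_ring_1 fps" assumes c0: "c $ 0 = 0"
  shows "(g * f^k) oo c = (g oo c) * (f oo c)^k"
  by (simp add: compose_mult[OF c0] compose_power[OF c0])

lemma comp_D: fixes L :: "'a::comm_ring_1 fps" assumes c0: "L $ 0 = 0"
  shows "(1 + fps_const u * fps_X + fps_const b * fps_X^2) oo L = 1 + fps_const u * L + fps_const b * L^2"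
  by (simp add: fps_compose_add_distrib compose_mult[OF c0] compose_power[OF c0] c0)



lemma cexp1: "fps_const ([:r:] + 2 * (yv :: 'a::comm_ring_1 poly)) = fps_const [:r:] + 2 * fps_const yv"
  by (simp add: fps_const_add fps_const_mult numeral_fps_const)
lemma cexp2: "fps_const ([:s:] + [:r:] * (yv :: 'a::comm_ring_1 poly) + yv^2) = fps_const [:s:] + fps_const [:r:] * fps_const yv + fps_const yv ^ 2"
  by (simp add: fps_const_add fps_const_mult fps_const_power)
lemma cexp3: "fps_const ([:r:] + 2 * (yv :: 'a::comm_ring_1 poly)) = fps_const ([:r:] + yv) + fps_const yv"
proof -
  have e: "([:r:] + 2 * (yv :: 'a::comm_ring_1 poly)) = ([:r:] + yv) + yv" by (simp only: mult_2 add.assoc)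
  have "fps_const ([:r:] + yv) + fps_const yv = fps_const ([:r:] + yv + (yv :: 'a poly))" by (rule fps_const_add)
  then show ?thesis by (simp only: e)
qed

lemma aux_sub: fixes c a b :: "'a::comm_ring_1" assumes "c = 1 + a + b" shows "c - (a + b) = 1"
proof -
  have "c - (a + b) = (1 + a + b) - (a + b)" using assms by simp
  then show ?thesis by simp
qed

lemma jconv_shift:
  fixes aa bb :: "nat \<Rightarrow> 'a::comm_ring_1"
  assumes "\<And>j. aa (Suc j) = u" "\<And>j. bb (Suc j) = b"
  shows "jconv aa bb m (Suc j) = jconv aa bb m 1"
proof (induction m arbitrary: j)
  case 0 then show ?case using assms by simp
next
  case (Suc m)
  have "jconv aa bb m (Suc (Suc j)) = jconv aa bb m 1" "jconv aa bb m (Suc 1) = jconv aa bb m 1"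
    by (rule Suc.IH)+
  then show ?case using assms by (simp only: jconv.simps One_nat_def)
qed

theorem mainTheorem15:
  fixes r s :: "'a::comm_ring_1"
  defines "y \<equiv> (yv :: 'a poly)"
  defines "D \<equiv> 1 + fps_const ([:r:] + 2 * y) * fps_X
                 + fps_const ([:s:] + [:r:] * y + y ^ 2) * fps_X ^ 2"
  defines "R \<equiv> riordan ((1 + fps_const y * fps_X) * fps_uinv D) (fps_X * fps_uinv D)"
  defines "B \<equiv> Abs_fps (Btilde r s)"
  shows "((\<exists>M. lower_tri M \<and> ltmult M R = ltid \<and> ltmult R M = ltid)
          \<and> (\<forall>M. lower_tri M \<and> ltmult M R = ltid \<and> ltmult R M = ltid
                 \<longrightarrow> Abs_fps (\<lambda>n. M n 0) = B))
       \<and> (\<lambda>m. jconv (\<lambda>j. if j = 0 then [:r:] + y else [:r:] + 2 * y)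
                     (\<lambda>j. [:s:] + [:r:] * y + y ^ 2) m 0) \<longlonglongrightarrow> B"
proof -
  define u where "u = [:r:] + 2 * y"
  define b where "b = [:s:] + [:r:] * y + y ^ 2"
  define CU where "CU = fps_const u"
  define CB where "CB = fps_const b"
  define X where "X = (fps_X :: 'a poly fps)"
  define cy where "cy = fps_const y"
  define C where "C = Abs_fps (cc u b)"
  have hC: "C = 1 + CU * X * C + CB * X^2 * C^2"
    unfolding C_def CU_def CB_def X_def by (rule cc_eq)
  define K1 where "K1 = 1 + cy * X * C"
  define Ki where "Ki = fps_uinv K1"
  have K1Ki: "K1 * Ki = 1" unfolding Ki_def by (rule uinv_right) (simp add: K1_def X_def)
  define B0 where "B0 = C * Ki"
  have "B0 * K1 = C * (K1 * Ki)" by (simp add: B0_def ac_simps)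
  then have hBC: "B0 * K1 = C" using K1Ki by simp
  have quad: "B0 = 1 + fps_const [:r:] * fps_X * B0 + fps_const yv * fps_X * B0^2
                      + fps_const [:s:] * fps_X^2 * B0^2"
  proof (rule alg1)
    show "B0 * (1 + fps_const yv * fps_X * C) = C" using hBC unfolding K1_def cy_def y_def X_def .
    show "C = 1 + (fps_const [:r:] + 2 * fps_const yv) * fps_X * C +
      (fps_const [:s:] + fps_const [:r:] * fps_const yv + (fps_const yv)\<^sup>2) * fps_X\<^sup>2 * C\<^sup>2"
      using hC unfolding CU_def CB_def u_def b_def y_def X_def cexp1 cexp2 .
  qed
  have BB0: "B = B0"
  proof (rule fps_ext)
    fix n show "B $ n = B0 $ n"
      unfolding B_def Btilde_def Rev_eq[OF quad] by simp
  qed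
  have D0: "D $ 0 = 1" by (simp add: D_def)
  define Vd where "Vd = fps_uinv D"
  have DV: "D * Vd = 1" unfolding Vd_def by (rule uinv_right[OF D0])
  define f where "f = X * Vd"
  define g where "g = (1 + cy * X) * Vd"
  have f0: "f $ 0 = 0" by (simp add: f_def X_def)
  have Rdef: "R = riordan g f" unfolding R_def g_def f_def cy_def X_def Vd_def ..
  have Deq: "D = 1 + CU * X + CB * X^2" unfolding D_def CU_def CB_def u_def b_def X_def ..
  define M0 where "M0 = riordan B0 (X * C)"
  have L0: "(X * C) $ 0 = 0" by (simp add: X_def)
  have M0low: "lower_tri M0" unfolding M0_def X_def by (rule riordan_lower)
  have Rlow: "lower_tri R" unfolding Rdef f_def X_def by (rule riordan_lower)
  have RM: "ltmult R M0 = ltid"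
  proof (intro ext)
    fix n k
    define K where "K = C oo f"
    have hK: "K = 1 + CU * f * K + CB * f^2 * K^2"
    proof -
      have "K = (1 + CU * X * C + CB * X^2 * C^2) oo f" unfolding K_def
        by (rule arg_cong[of _ _ "\<lambda>A. A oo f", OF hC])
      also have "\<dots> = 1 + CU * f * K + CB * f^2 * K^2"
        unfolding CU_def CB_def X_def K_def by (rule comp_quad[OF f0])
      finally show ?thesis .
    qed
    have "K - D = (K - D) * (f * (CU + CB * f * (K + D)))"
      by (rule alg5[OF Deq DV f_def hK])
    then have KD: "K = D" by (rule fix_unique) (simp add: f0)
    have "f * K = X * (D * Vd)" unfolding f_def KD by (simp add: ac_simps)
    then have fK: "f * K = X" using DV by simp
    have "(B0 * K1) oo f = (B0 oo f) * (K1 oo f)" by (rule compose_mult[OF f0])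
    then have e1: "(B0 oo f) * (K1 oo f) = K" unfolding K_def using hBC by simp
    have "K1 oo f = 1 + cy * (f * K)"
      unfolding K1_def cy_def X_def K_def using comp_lin[OF f0] by (simp add: mult.assoc)
    then have e2: "K1 oo f = 1 + cy * X" using fK by simp
    have B0f: "(B0 oo f) * (1 + cy * X) = D" using e1 e2 KD by simp
    have gB: "g * (B0 oo f) = 1"
    proof -
      have "g * (B0 oo f) = Vd * ((B0 oo f) * (1 + cy * X))" unfolding g_def by (simp add: ac_simps)
      then show ?thesis using B0f DV by (simp add: mult.commute)
    qed
    have "(B0 * (X * C) ^ k) oo f = (B0 oo f) * (f * K) ^ k"
      unfolding X_def K_def by (rule comp_pow[OF f0])
    then have "(B0 * (X * C) ^ k) oo f = (B0 oo f) * X ^ k" using fK by simp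
    then have e3: "g * ((B0 * (X * C) ^ k) oo f) = X ^ k" using gB by (simp add: mult.assoc[symmetric])
    have "ltmult R M0 n k = (g * ((B0 * (X * C) ^ k) oo f)) $ n"
      unfolding Rdef M0_def by (rule riordan_mult[OF f0])
    also have "\<dots> = (X ^ k) $ n" by (simp only: e3)
    also have "\<dots> = ltid n k" by (simp add: X_def ltid_def fps_X_power_nth)
    finally show "ltmult R M0 n k = ltid n k" .
  qed
  have MR: "ltmult M0 R = ltid"
  proof (intro ext)
    fix n k
    define L where "L = X * C"
    have L0': "L $ 0 = 0" using L0 by (simp add: L_def)
    define Vl where "Vl = Vd oo L"
    have DL: "D oo L = C"
    proof -
      have "D oo L = 1 + CU * L + CB * L^2"
        unfolding Deq CU_def CB_def X_def by (rule comp_D[OF L0'])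
      also have "\<dots> = 1 + CU * X * C + CB * X^2 * C^2" by (simp add: L_def power_mult_distrib ac_simps)
      also have "\<dots> = C" by (rule hC[symmetric])
      finally show ?thesis .
    qed
    have CVl: "C * Vl = 1"
    proof -
      have "(D * Vd) oo L = (D oo L) * Vl" unfolding Vl_def by (rule compose_mult[OF L0'])
      then show ?thesis using DV DL by simp
    qed
    have fL: "f oo L = X"
    proof -
      have "f oo L = (X oo L) * Vl" unfolding f_def Vl_def by (rule compose_mult[OF L0'])
      also have "X oo L = L" unfolding X_def using L0' by simp
      finally have "f oo L = X * (C * Vl)" by (simp add: L_def mult.assoc)
      then show ?thesis using CVl by simp
    qed
    have gL: "B0 * (g oo L) = 1"
    proof -
      have "g oo L = ((1 + cy * X) oo L) * Vl" unfolding g_def Vl_def by (rule compose_mult[OF L0'])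
      also have "(1 + cy * X) oo L = 1 + cy * L" unfolding cy_def X_def by (rule comp_lin0[OF L0'])
      finally have "g oo L = K1 * Vl" by (simp add: L_def K1_def mult.assoc)
      then have "B0 * (g oo L) = (B0 * K1) * Vl" by (simp add: mult.assoc)
      then show ?thesis using hBC CVl by simp
    qed
    have "(g * f ^ k) oo L = (g oo L) * (f oo L) ^ k" by (rule comp_gf[OF L0'])
    then have "(g * f ^ k) oo L = (g oo L) * X ^ k" using fL by simp
    then have e3: "B0 * ((g * f ^ k) oo L) = X ^ k" using gL by (simp add: mult.assoc[symmetric])
    have "ltmult M0 R n k = (B0 * ((g * f ^ k) oo L)) $ n"
      unfolding Rdef M0_def L_def[symmetric] by (rule riordan_mult[OF L0'])
    also have "\<dots> = (X ^ k) $ n" by (simp only: e3)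
    also have "\<dots> = ltid n k" by (simp add: X_def ltid_def fps_X_power_nth)
    finally show "ltmult M0 R n k = ltid n k" .
  qed
  have part1: "(\<exists>M. lower_tri M \<and> ltmult M R = ltid \<and> ltmult R M = ltid)
          \<and> (\<forall>M. lower_tri M \<and> ltmult M R = ltid \<and> ltmult R M = ltid
                 \<longrightarrow> Abs_fps (\<lambda>n. M n 0) = B)"
  proof (intro conjI allI impI)
    show "\<exists>M. lower_tri M \<and> ltmult M R = ltid \<and> ltmult R M = ltid" using M0low MR RM by blast
    fix M assume H: "lower_tri M \<and> ltmult M R = ltid \<and> ltmult R M = ltid"
    have "M = ltmult M ltid" by (rule ltmult_id_right[symmetric]) (use H in blast)
    also have "\<dots> = ltmult M (ltmult R M0)" using RM by simp
    also have "\<dots> = ltmult (ltmult M R) M0" by (rule ltmult_assoc[OF Rlow])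
    also have "\<dots> = M0" using H by (simp add: ltmult_id_left)
    finally have "M = M0" .
    then have "Abs_fps (\<lambda>n. M n 0) = Abs_fps (\<lambda>n. B0 $ n)" unfolding M0_def riordan_def by simp
    also have "\<dots> = B0" by (rule fps_ext) simp
    finally show "Abs_fps (\<lambda>n. M n 0) = B" unfolding BB0 .
  qed
  define aa where "aa = (\<lambda>j::nat. if j = 0 then [:r:] + y else [:r:] + 2 * y)"
  define bb where "bb = (\<lambda>j::nat. [:s:] + [:r:] * y + y ^ 2)"
  define J where "J = (\<lambda>m. jconv aa bb m 1)"
  have sh: "jconv aa bb m (Suc j) = J m" for m j
    unfolding J_def by (rule jconv_shift[of aa u bb b]) (simp_all add: aa_def bb_def u_def b_def)
  define Q where "Q = 1 - CU * X - CB * X^2 * C"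
  have QC: "Q * C = 1"
  proof -
    have "Q * C = C - (CU * X * C + CB * X^2 * C^2)" by (simp add: Q_def algebra_simps power2_eq_square)
    also have "\<dots> = 1"
      by (rule aux_sub[OF hC])
    finally show ?thesis .
  qed
  have errJ: "\<exists>E. J m - C = X^(2*m+2) * E" for m
  proof (induction m)
    case 0
    have J0: "J 0 = fps_uinv (1 - CU * X)" by (simp add: J_def aa_def CU_def u_def X_def)
    have P0: "(1 - CU * X) * J 0 = 1" unfolding J0 by (rule uinv_right) (simp add: X_def)
    have "J 0 - C = J 0 * C * (Q - (1 - CU * X))" by (rule inv_diff[OF P0 QC])
    also have "\<dots> = X^(2*0+2) * (- (J 0 * C * CB * C))" by (simp add: Q_def algebra_simps power2_eq_square)
    finally show ?case by blast
  next
    case (Suc m)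
    then obtain E where E: "J m - C = X^(2*m+2) * E" by blast
    have Js: "J (Suc m) = fps_uinv (1 - CU * X - CB * X^2 * J m)"
      using sh[of m 1] by (simp add: J_def aa_def bb_def CU_def CB_def u_def b_def X_def)
    have P0: "(1 - CU * X - CB * X^2 * J m) * J (Suc m) = 1" unfolding Js
      by (rule uinv_right) (simp add: X_def)
    have "J (Suc m) - C = J (Suc m) * C * (Q - (1 - CU * X - CB * X^2 * J m))" by (rule inv_diff[OF P0 QC])
    also have "\<dots> = J (Suc m) * C * CB * X^2 * (J m - C)" by (simp add: Q_def algebra_simps)
    also have "\<dots> = X^2 * X^(2*m+2) * (J (Suc m) * C * CB * E)" unfolding E by (simp add: ac_simps)
    also have "X^2 * X^(2*m+2) = X^(2 * Suc m + 2)"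
      by (simp only: power_add[symmetric]) (rule arg_cong[where f="\<lambda>i. X^i"], simp)
    finally show ?case by blast
  qed
  define CA where "CA = fps_const ([:r:] + y)"
  have CUA: "CU = CA + cy" unfolding CU_def CA_def cy_def u_def y_def by (rule cexp3)
  have QB: "(1 - CA * X - CB * X^2 * C) * B0 = 1"
    by (rule alg6[OF Q_def CUA QC]) (use hBC in \<open>simp add: K1_def\<close>)
  define JB where "JB = (\<lambda>m. jconv aa bb m 0)"
  have errB: "\<exists>E. JB m - B0 = X^(2*m+2) * E" for m
  proof (cases m)
    case 0
    have J0: "JB 0 = fps_uinv (1 - CA * X)" by (simp add: JB_def aa_def CA_def X_def)
    have P0: "(1 - CA * X) * JB 0 = 1" unfolding J0 by (rule uinv_right) (simp add: X_def)
    have "JB 0 - B0 = JB 0 * B0 * ((1 - CA * X - CB * X^2 * C) - (1 - CA * X))"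
      by (rule inv_diff[OF P0 QB])
    also have "\<dots> = X^(2*0+2) * (- (JB 0 * B0 * CB * C))" by (simp add: algebra_simps power2_eq_square)
    finally show ?thesis unfolding 0 by blast
  next
    case (Suc k)
    obtain E where E: "J k - C = X^(2*k+2) * E" using errJ by blast
    have Js: "JB (Suc k) = fps_uinv (1 - CA * X - CB * X^2 * J k)"
      using sh[of k 0] by (simp add: JB_def J_def aa_def bb_def CA_def CB_def b_def X_def)
    have P0: "(1 - CA * X - CB * X^2 * J k) * JB (Suc k) = 1" unfolding Js
      by (rule uinv_right) (simp add: X_def)
    have "JB (Suc k) - B0 = JB (Suc k) * B0 * ((1 - CA * X - CB * X^2 * C) - (1 - CA * X - CB * X^2 * J k))"
      by (rule inv_diff[OF P0 QB])
    also have "\<dots> = JB (Suc k) * B0 * CB * X^2 * (J k - C)" by (simp add: algebra_simps)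
    also have "\<dots> = X^2 * X^(2*k+2) * (JB (Suc k) * B0 * CB * E)" unfolding E by (simp add: ac_simps)
    also have "X^2 * X^(2*k+2) = X^(2 * Suc k + 2)"
      by (simp only: power_add[symmetric]) (rule arg_cong[where f="\<lambda>i. X^i"], simp)
    finally show ?thesis unfolding Suc by blast
  qed
  have part2: "(\<lambda>m. jconv aa bb m 0) \<longlonglongrightarrow> B0"
  proof (rule tendsto_fpsI)
    fix n
    show "eventually (\<lambda>m. jconv aa bb m 0 $ n = B0 $ n) sequentially"
      unfolding eventually_sequentially
    proof (intro exI allI impI)
      fix m assume "n \<le> m"
      obtain E where E: "JB m - B0 = X^(2*m+2) * E" using errB by blast
      have "(JB m - B0) $ n = 0" unfolding E X_def using \<open>n \<le> m\<close>
        by (simp only: fps_X_power_mult_nth) simp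
      then show "jconv aa bb m 0 $ n = B0 $ n" by (simp add: JB_def)
    qed
  qed
  have part2': "(\<lambda>m. jconv (\<lambda>j. if j = 0 then [:r:] + y else [:r:] + 2 * y)
                     (\<lambda>j. [:s:] + [:r:] * y + y ^ 2) m 0) \<longlonglongrightarrow> B"
    using part2 unfolding aa_def bb_def BB0 .
  show ?thesis by (rule conjI[OF part1 part2'])
qed



end
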